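(* Let $N$ be a finite set and $\underline{N}\colon\mathrm{Aff}/\mathbb{Z}\to(\mathrm{Sets})$ the associated constant sheaf. For every ring $B$ the maps $\underline{N}(B)\to\underline{N}(B[[t]])\to\underline{N}(B((t)))$ are bijective. Equivalently, if $B((t))\simeq C_1\times\cdots\times C_l$ (resp. $B[[t]]\simeq C_1\times\cdots\times C_l$) then $B\simeq B_1\times\cdots\times B_l$ with $C_j=B_j((t))$ (resp. $C_j=B_j[[t]]$).
   Context: $B((t))=B[[t]][t^{-1}]$. The constant sheaf $\underline{N}$ assigns to $\mathrm{Spec}\,C$ the set of locally constant functions $\mathrm{Spec}\,C\to N$. *)

theory Defs
  imports "HOL-Library.FuncSet" "HOL-Computational_Algebra.Formal_Power_Series"
    "HOL-Computational_Algebra.Formal_Laurent_Series"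
begin

definition prime_ideal :: "'a::comm_ring_1 set \<Rightarrow> bool" where
  "prime_ideal P \<longleftrightarrow> 0 \<in> P \<and> (\<forall>x\<in>P. \<forall>y\<in>P. x + y \<in> P)
     \<and> (\<forall>r. \<forall>x\<in>P. r * x \<in> P) \<and> 1 \<notin> P
     \<and> (\<forall>x y. x * y \<in> P \<longrightarrow> x \<in> P \<or> y \<in> P)"

definition Spec :: "'a::comm_ring_1 set set" where
  "Spec = {P. prime_ideal P}"

definition zariski_open :: "'a::comm_ring_1 set \<Rightarrow> 'a set set" where
  "zariski_open S = {P \<in> Spec. \<not> S \<subseteq> P}"

definition locally_constant_on_Spec :: "('a::comm_ring_1 set \<Rightarrow> 'n) \<Rightarrow> bool" where
  "locally_constant_on_Spec f \<longleftrightarrow>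
     (\<forall>P\<in>Spec. \<exists>S. P \<in> zariski_open S \<and> (\<forall>Q\<in>zariski_open S. f Q = f P))"

definition const_sheaf :: "'n set \<Rightarrow> ('a::comm_ring_1 set \<Rightarrow> 'n) set" where
  "const_sheaf N = {f \<in> extensional Spec. f \<in> Spec \<rightarrow> N \<and> locally_constant_on_Spec f}"

definition sheaf_map :: "('a::comm_ring_1 \<Rightarrow> 'c::comm_ring_1) \<Rightarrow>
     ('a set \<Rightarrow> 'n) \<Rightarrow> ('c set \<Rightarrow> 'n)" where
  "sheaf_map phi f = restrict (\<lambda>Q. f (phi -` Q)) Spec"

end

theory Submission
  imports Defs
begin

unbundle fps_syntax

definition is_ideal :: "'a::comm_ring_1 set \<Rightarrow> bool" where
  "is_ideal I \<longleftrightarrow> 0 \<in> I \<and> (\<forall>x\<in>I. \<forall>y\<in>I. x + y \<in> I) \<and> (\<forall>r. \<forall>x\<in>I. r * x \<in> I)"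

lemma idealD:
  assumes "is_ideal I"
  shows "0 \<in> I" "x \<in> I \<Longrightarrow> y \<in> I \<Longrightarrow> x + y \<in> I" "x \<in> I \<Longrightarrow> r * x \<in> I"
    "x \<in> I \<Longrightarrow> x * r \<in> I" "x \<in> I \<Longrightarrow> - x \<in> I" "x \<in> I \<Longrightarrow> y \<in> I \<Longrightarrow> x - y \<in> I"
proof -
  show "0 \<in> I" using assms by (simp add: is_ideal_def)
  show "x \<in> I \<Longrightarrow> y \<in> I \<Longrightarrow> x + y \<in> I" using assms by (simp add: is_ideal_def)
  show "x \<in> I \<Longrightarrow> r * x \<in> I" using assms by (simp add: is_ideal_def)
  show "x \<in> I \<Longrightarrow> x * r \<in> I" using assms by (simp add: is_ideal_def mult.commute)
  show mi: "x \<in> I \<Longrightarrow> - x \<in> I" using assms unfolding is_ideal_def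
    by (metis mult_minus1)
  show "x \<in> I \<Longrightarrow> y \<in> I \<Longrightarrow> x - y \<in> I" using assms unfolding is_ideal_def
    by (metis mult_minus1 diff_conv_add_uminus)
qed

lemma ideal_sum:
  assumes "is_ideal I" "\<And>i. i \<in> S \<Longrightarrow> f i \<in> I"
  shows "sum f S \<in> I"
proof (cases "finite S")
  case True
  then show ?thesis using assms(2)
  proof (induction S rule: finite_induct)
    case empty
    then show ?case using idealD(1)[OF assms(1)] by simp
  next
    case (insert a F)
    then have "f a \<in> I" "sum f F \<in> I" by auto
    then have "f a + sum f F \<in> I" by (rule idealD(2)[OF assms(1)])
    then show ?case using insert.hyps by simp
  qed
next
  case False
  then show ?thesis using idealD(1)[OF assms(1)] by simp
qed

lemma prime_is_ideal: "prime_ideal P \<Longrightarrow> is_ideal P"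
  by (simp add: prime_ideal_def is_ideal_def)

lemma prime_pow: "prime_ideal P \<Longrightarrow> x ^ k \<in> P \<Longrightarrow> x \<in> P"
proof (induction k)
  case 0 then show ?case by (simp add: prime_ideal_def)
next
  case (Suc k) then show ?case by (simp add: prime_ideal_def) blast
qed

lemma exists_prime:
  fixes I :: "'a::comm_ring_1 set"
  assumes I: "is_ideal I" and S1: "1 \<in> S" and Sm: "\<And>x y. x \<in> S \<Longrightarrow> y \<in> S \<Longrightarrow> x * y \<in> S"
    and dis: "I \<inter> S = {}"
  shows "\<exists>P. prime_ideal P \<and> I \<subseteq> P \<and> P \<inter> S = {}"
proof -
  define A where "A = {K. is_ideal K \<and> I \<subseteq> K \<and> K \<inter> S = {}}"
  have "\<exists>M\<in>A. \<forall>X\<in>A. M \<subseteq> X \<longrightarrow> X = M"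
  proof (rule subset_Zorn)
    fix C assume C: "subset.chain A C"
    show "\<exists>U\<in>A. \<forall>X\<in>C. X \<subseteq> U"
    proof (cases "C = {}")
      case True
      then show ?thesis using I dis by (auto simp: A_def)
    next
      case False
      have CA: "C \<subseteq> A" and tot: "\<And>X Y. X \<in> C \<Longrightarrow> Y \<in> C \<Longrightarrow> X \<subseteq> Y \<or> Y \<subseteq> X"
        using C by (auto simp: subset_chain_def)
      have "is_ideal (\<Union>C)"
        unfolding is_ideal_def
      proof (intro conjI ballI allI)
        show "0 \<in> \<Union>C" using False CA by (auto simp: A_def is_ideal_def)
      next
        fix x y assume "x \<in> \<Union>C" "y \<in> \<Union>C"
        then obtain X Y where XY: "X \<in> C" "Y \<in> C" "x \<in> X" "y \<in> Y" by auto
        show "x + y \<in> \<Union>C"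
        proof (cases "X \<subseteq> Y")
          case True
          have "is_ideal Y" using XY CA by (auto simp: A_def)
          moreover have "x \<in> Y" using XY True by blast
          ultimately have "x + y \<in> Y" using XY(4) by (blast intro: idealD(2))
          then show ?thesis using XY by auto
        next
          case False
          then have "Y \<subseteq> X" using tot XY by blast
          have "is_ideal X" using XY CA by (auto simp: A_def)
          moreover have "y \<in> X" using XY \<open>Y \<subseteq> X\<close> by blast
          ultimately have "x + y \<in> X" using XY(3) by (blast intro: idealD(2))
          then show ?thesis using XY by auto
        qed
      next
        fix r x assume "x \<in> \<Union>C"
        then obtain X where "X \<in> C" "x \<in> X" by auto
        moreover have "is_ideal X" using \<open>X \<in> C\<close> CA by (auto simp: A_def)
        ultimately have "r * x \<in> X" by (blast intro: idealD(3))
        then show "r * x \<in> \<Union>C" using \<open>X \<in> C\<close> by blast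
      qed
      moreover have "I \<subseteq> \<Union>C" using False CA by (auto simp: A_def)
      moreover have "\<Union>C \<inter> S = {}" using CA by (auto simp: A_def)
      ultimately show ?thesis by (auto simp: A_def)
    qed
  qed
  then obtain M where MA: "M \<in> A" and Mmax: "\<And>X. X \<in> A \<Longrightarrow> M \<subseteq> X \<Longrightarrow> X = M" by blast
  have Mi: "is_ideal M" and IM: "I \<subseteq> M" and MS: "M \<inter> S = {}" using MA by (auto simp: A_def)
  have ext: "\<exists>m\<in>M. \<exists>r. m + r * x \<in> S" if "x \<notin> M" for x
  proof (rule ccontr)
    assume nn: "\<not> ?thesis"
    define K where "K = {m + r * x |m r. m \<in> M}"
    have "is_ideal K" unfolding is_ideal_def K_def
    proof (intro conjI ballI allI)
      have "0 = (0::'a) + 0 * x" by simp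
      then show "0 \<in> {m + r * x |m r. m \<in> M}" using idealD(1)[OF Mi] by blast
    next
      fix a b assume "a \<in> {m + r * x |m r. m \<in> M}" "b \<in> {m + r * x |m r. m \<in> M}"
      then obtain m1 r1 m2 r2 where "a = m1 + r1 * x" "b = m2 + r2 * x" "m1 \<in> M" "m2 \<in> M" by auto
      then have "a + b = (m1 + m2) + (r1 + r2) * x" by (simp add: algebra_simps)
      moreover have "m1 + m2 \<in> M" using \<open>m1 \<in> M\<close> \<open>m2 \<in> M\<close> by (rule idealD[OF Mi])
      ultimately show "a + b \<in> {m + r * x |m r. m \<in> M}" by blast
    next
      fix c a assume "a \<in> {m + r * x |m r. m \<in> M}"
      then obtain m1 r1 where "a = m1 + r1 * x" "m1 \<in> M" by auto
      then have "c * a = (c * m1) + (c * r1) * x" by (simp add: algebra_simps)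
      moreover have "c * m1 \<in> M" using \<open>m1 \<in> M\<close> by (rule idealD[OF Mi])
      ultimately show "c * a \<in> {m + r * x |m r. m \<in> M}" by blast
    qed
    moreover have "M \<subseteq> K"
    proof
      fix m assume "m \<in> M"
      moreover have "m = m + 0 * x" by simp
      ultimately show "m \<in> K" unfolding K_def by blast
    qed
    moreover have "K \<inter> S = {}" using nn unfolding K_def by auto
    ultimately have "K = M" using Mmax IM by (auto simp: A_def)
    moreover have "x \<in> K"
    proof -
      have "x = 0 + 1 * x" by simp
      then show ?thesis unfolding K_def using idealD(1)[OF Mi] by blast
    qed
    ultimately show False using that by simp
  qed
  have "prime_ideal M"
    unfolding prime_ideal_def
  proof (intro conjI ballI allI impI)
    show "0 \<in> M" by (rule idealD(1)[OF Mi])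
    show "\<And>x y. x \<in> M \<Longrightarrow> y \<in> M \<Longrightarrow> x + y \<in> M" by (rule idealD(2)[OF Mi])
    show "\<And>r x. x \<in> M \<Longrightarrow> r * x \<in> M" by (rule idealD(3)[OF Mi])
    show "1 \<notin> M" using MS S1 by auto
  next
    fix x y assume xy: "x * y \<in> M"
    show "x \<in> M \<or> y \<in> M"
    proof (rule ccontr)
      assume "\<not> (x \<in> M \<or> y \<in> M)"
      then obtain m1 r1 m2 r2 where h: "m1 \<in> M" "m1 + r1 * x \<in> S" "m2 \<in> M" "m2 + r2 * y \<in> S"
        using ext by meson
      have eq: "(m1 + r1 * x) * (m2 + r2 * y) = m1 * (m2 + r2 * y) + (r1 * x) * m2 + (r1 * r2) * (x * y)"
        by (simp add: algebra_simps)
      have a: "m1 * (m2 + r2 * y) \<in> M" by (rule idealD(4)[OF Mi h(1)])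
      have b: "(r1 * x) * m2 \<in> M" by (rule idealD(3)[OF Mi h(3)])
      have c: "(r1 * r2) * (x * y) \<in> M" by (rule idealD(3)[OF Mi xy])
      have "(m1 + r1 * x) * (m2 + r2 * y) \<in> M"
        unfolding eq by (intro idealD(2)[OF Mi] a b c)
      moreover have "(m1 + r1 * x) * (m2 + r2 * y) \<in> S" using h Sm by blast
      ultimately show False using MS by blast
    qed
  qed
  then show ?thesis using IM MS by blast
qed

lemma prime_over_proper:
  fixes I :: "'a::comm_ring_1 set"
  assumes "is_ideal I" "1 \<notin> I"
  shows "\<exists>P. prime_ideal P \<and> I \<subseteq> P"
  using exists_prime[OF assms(1), of "{1}"] assms(2) by auto

lemma in_all_primes_nilpotent:
  fixes x :: "'a::comm_ring_1"
  assumes "\<And>P. P \<in> Spec \<Longrightarrow> x \<in> P"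
  shows "\<exists>k. x ^ k = 0"
proof (rule ccontr)
  assume nz: "\<not> ?thesis"
  have "is_ideal {0::'a}" by (simp add: is_ideal_def)
  moreover have "1 \<in> range (\<lambda>k. x ^ k)" by (metis power_0 rangeI)
  moreover have "\<And>a b. a \<in> range (\<lambda>k. x ^ k) \<Longrightarrow> b \<in> range (\<lambda>k. x ^ k) \<Longrightarrow> a * b \<in> range (\<lambda>k. x ^ k)"
  proof -
    fix a b assume "a \<in> range (\<lambda>k. x ^ k)" "b \<in> range (\<lambda>k. x ^ k)"
    then obtain i j where "a = x ^ i" "b = x ^ j" by blast
    then have "a * b = x ^ (i + j)" by (simp add: power_add)
    then show "a * b \<in> range (\<lambda>k. x ^ k)" by blast
  qed
  moreover have "{0} \<inter> range (\<lambda>k. x ^ k) = {}" using nz by auto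
  ultimately obtain P where P: "prime_ideal P" "P \<inter> range (\<lambda>k. x ^ k) = {}"
    using exists_prime[of "{0}" "range (\<lambda>k. x ^ k)"] by blast
  have "x \<in> range (\<lambda>k. x ^ k)" by (metis power_one_right rangeI)
  then have "x \<notin> P" using P(2) by blast
  then show False using assms P by (simp add: Spec_def)
qed


lemma lc_idempotent:
  fixes g :: "'a::comm_ring_1 set \<Rightarrow> 'n"
  assumes lc: "locally_constant_on_Spec g"
  shows "\<exists>e. e * e = e \<and> (\<forall>P\<in>Spec. g P = v \<longleftrightarrow> e \<notin> P)"
proof -
  define I where "I = {x::'a. \<forall>P\<in>Spec. g P \<noteq> v \<longrightarrow> x \<in> P}"
  define J where "J = {x::'a. \<forall>P\<in>Spec. g P = v \<longrightarrow> x \<in> P}"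
  have pI: "\<And>P. P \<in> Spec \<Longrightarrow> is_ideal P" by (simp add: Spec_def prime_is_ideal)
  have Ii: "is_ideal I" unfolding I_def is_ideal_def
    using idealD(1,2,3)[OF pI] by blast
  have Ji: "is_ideal J" unfolding J_def is_ideal_def
    using idealD(1,2,3)[OF pI] by blast
  define K where "K = {x + y |x y. x \<in> I \<and> y \<in> J}"
  have Ki: "is_ideal K" unfolding is_ideal_def
  proof (intro conjI ballI allI)
    have "(0::'a) = 0 + 0" by simp
    then show "0 \<in> K" unfolding K_def using idealD(1)[OF Ii] idealD(1)[OF Ji] by blast
  next
    fix a b assume "a \<in> K" "b \<in> K"
    then obtain x1 y1 x2 y2 where h: "a = x1 + y1" "b = x2 + y2" "x1 \<in> I" "x2 \<in> I" "y1 \<in> J" "y2 \<in> J"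
      unfolding K_def by blast
    then have "a + b = (x1 + x2) + (y1 + y2)" by (simp add: algebra_simps)
    moreover have "x1 + x2 \<in> I" "y1 + y2 \<in> J"
      using idealD(2)[OF Ii h(3) h(4)] idealD(2)[OF Ji h(5) h(6)] by auto
    ultimately show "a + b \<in> K" unfolding K_def by blast
  next
    fix r a assume "a \<in> K"
    then obtain x1 y1 where h: "a = x1 + y1" "x1 \<in> I" "y1 \<in> J"
      unfolding K_def by blast
    then have "r * a = r * x1 + r * y1" by (simp add: algebra_simps)
    moreover have "r * x1 \<in> I" "r * y1 \<in> J"
      using idealD(3)[OF Ii h(2)] idealD(3)[OF Ji h(3)] by auto
    ultimately show "r * a \<in> K" unfolding K_def by blast
  qed
  have "1 \<in> K"
  proof (rule ccontr)
    assume "1 \<notin> K"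
    then obtain P where P: "prime_ideal P" "K \<subseteq> P" using prime_over_proper[OF Ki] by blast
    have PS: "P \<in> Spec" using P by (simp add: Spec_def)
    have IP: "I \<subseteq> P"
    proof
      fix x assume "x \<in> I"
      moreover have "x = x + 0" by simp
      ultimately have "x \<in> K" unfolding K_def using idealD(1)[OF Ji] by blast
      then show "x \<in> P" using P by blast
    qed
    have JP: "J \<subseteq> P"
    proof
      fix x assume "x \<in> J"
      moreover have "x = 0 + x" by simp
      ultimately have "x \<in> K" unfolding K_def using idealD(1)[OF Ii] by blast
      then show "x \<in> P" using P by blast
    qed
    obtain S where S: "P \<in> zariski_open S" "\<And>Q. Q \<in> zariski_open S \<Longrightarrow> g Q = g P"
      using lc PS unfolding locally_constant_on_Spec_def by blast
    obtain s where s: "s \<in> S" "s \<notin> P" using S(1) by (auto simp: zariski_open_def)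
    show False
    proof (cases "g P = v")
      case True
      have "s \<in> I" unfolding I_def mem_Collect_eq
      proof (intro ballI impI)
        fix Q assume "Q \<in> Spec" "g Q \<noteq> v"
        then show "s \<in> Q" using S(2)[of Q] True s(1) by (auto simp: zariski_open_def)
      qed
      then show False using IP s by blast
    next
      case False
      have "s \<in> J" unfolding J_def mem_Collect_eq
      proof (intro ballI impI)
        fix Q assume "Q \<in> Spec" "g Q = v"
        then show "s \<in> Q" using S(2)[of Q] False s(1) by (auto simp: zariski_open_def)
      qed
      then show False using JP s by blast
    qed
  qed
  then obtain x y where xy: "1 = x + y" "x \<in> I" "y \<in> J" unfolding K_def by blast
  have "\<And>P::'a set. P \<in> Spec \<Longrightarrow> x * y \<in> P"
  proof -
    fix P :: "'a set" assume PS: "P \<in> Spec"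
    show "x * y \<in> P"
    proof (cases "g P = v")
      case True
      then have "y \<in> P" using xy(3) PS unfolding J_def by blast
      then show ?thesis using idealD(3)[OF pI[OF PS]] by blast
    next
      case False
      then have "x \<in> P" using xy(2) PS unfolding I_def by blast
      then show ?thesis using idealD(4)[OF pI[OF PS]] by blast
    qed
  qed
  then obtain k0 where "(x * y) ^ k0 = 0" using in_all_primes_nilpotent by blast
  then have k: "(x * y) ^ Suc k0 = 0" by simp
  define k where "k = Suc k0"
  define K2 where "K2 = {x ^ k * a + y ^ k * b |a b. True}"
  have K2i: "is_ideal K2" unfolding is_ideal_def K2_def
  proof (intro conjI ballI allI)
    have "(0::'a) = x ^ k * 0 + y ^ k * 0" by simp
    then show "0 \<in> {x ^ k * a + y ^ k * b |a b. True}" by blast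
  next
    fix c d assume "c \<in> {x ^ k * a + y ^ k * b |a b. True}" "d \<in> {x ^ k * a + y ^ k * b |a b. True}"
    then obtain a1 b1 a2 b2 where "c = x ^ k * a1 + y ^ k * b1" "d = x ^ k * a2 + y ^ k * b2" by blast
    then have "c + d = x ^ k * (a1 + a2) + y ^ k * (b1 + b2)" by (simp add: algebra_simps)
    then show "c + d \<in> {x ^ k * a + y ^ k * b |a b. True}" by blast
  next
    fix r c assume "c \<in> {x ^ k * a + y ^ k * b |a b. True}"
    then obtain a1 b1 where "c = x ^ k * a1 + y ^ k * b1" by blast
    then have "r * c = x ^ k * (r * a1) + y ^ k * (r * b1)" by (simp add: algebra_simps)
    then show "r * c \<in> {x ^ k * a + y ^ k * b |a b. True}" by blast
  qed
  have "1 \<in> K2"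
  proof (rule ccontr)
    assume "1 \<notin> K2"
    then obtain P where P: "prime_ideal P" "K2 \<subseteq> P" using prime_over_proper[OF K2i] by blast
    have "x ^ k = x ^ k * 1 + y ^ k * 0" by simp
    then have "x ^ k \<in> P" using P unfolding K2_def by blast
    then have xP: "x \<in> P" using prime_pow[OF P(1)] by blast
    have "y ^ k = x ^ k * 0 + y ^ k * 1" by simp
    then have "y ^ k \<in> P" using P unfolding K2_def by blast
    then have "y \<in> P" using prime_pow[OF P(1)] by blast
    then have "x + y \<in> P" using xP idealD(2)[OF prime_is_ideal[OF P(1)]] by blast
    then show False using xy(1) P(1) unfolding prime_ideal_def by metis
  qed
  then obtain a b where ab: "1 = x ^ k * a + y ^ k * b" unfolding K2_def by blast
  define e where "e = x ^ k * a"
  have 1: "1 - e = y ^ k * b" unfolding e_def by (subst ab) simp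
  have "e * (1 - e) = e * (y ^ k * b)" using 1 by simp
  also have "\<dots> = (x * y) ^ k * (a * b)" by (simp add: e_def power_mult_distrib algebra_simps)
  finally have "e * (1 - e) = (x * y) ^ k * (a * b)" .
  then have "e * (1 - e) = 0" using k unfolding k_def by simp
  then have ee: "e * e = e" by (simp add: algebra_simps)
  have "\<forall>P\<in>Spec. g P = v \<longleftrightarrow> e \<notin> P"
  proof
    fix P :: "'a set" assume PS: "P \<in> Spec"
    have pr: "prime_ideal P" using PS by (simp add: Spec_def)
    show "g P = v \<longleftrightarrow> e \<notin> P"
    proof
      assume gv: "g P = v"
      then have "y \<in> P" using xy(3) PS unfolding J_def by blast
      then have "y * (y ^ k0 * b) \<in> P" by (rule idealD(4)[OF pI[OF PS]])
      then have "y ^ k * b \<in> P" unfolding k_def by (simp add: mult.assoc)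
      then have "1 - e \<in> P" using 1 by simp
      then show "e \<notin> P"
      proof (intro notI)
        assume a1: "1 - e \<in> P" and a2: "e \<in> P"
        have "(1 - e) + e \<in> P" using idealD(2)[OF prime_is_ideal[OF pr] a1 a2] .
        then have "1 \<in> P" by simp
        moreover have "1 \<notin> P" using pr by (simp add: prime_ideal_def)
        ultimately show False by simp
      qed
    next
      assume "e \<notin> P"
      show "g P = v"
      proof (rule ccontr)
        assume "g P \<noteq> v"
        then have "x \<in> P" using xy(2) PS unfolding I_def by blast
        then have "x * (x ^ k0 * a) \<in> P" by (rule idealD(4)[OF pI[OF PS]])
        then have "e \<in> P" unfolding e_def k_def by (simp add: mult.assoc)
        then show False using \<open>e \<notin> P\<close> by simp
      qed
    qed
  qed
  then show ?thesis using ee by blast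
qed



lemma fls_times_nth_gen:
  fixes f g :: "'a::comm_ring_1 fls"
  assumes "a \<le> fls_subdegree f" "n - fls_subdegree g \<le> b"
  shows "(f * g) $$ n = (\<Sum>i=a..b. f $$ i * g $$ (n - i))"
proof -
  have "(f * g) $$ n = (\<Sum>i=fls_subdegree f..n - fls_subdegree g. f $$ i * g $$ (n - i))"
    by (rule fls_times_nth(2))
  also have "\<dots> = (\<Sum>i=a..b. f $$ i * g $$ (n - i))"
  proof (rule sum.mono_neutral_left)
    show "finite {a..b}" by simp
    show "{fls_subdegree f..n - fls_subdegree g} \<subseteq> {a..b}" using assms by auto
    show "\<forall>i\<in>{a..b} - {fls_subdegree f..n - fls_subdegree g}. f $$ i * g $$ (n - i) = 0"
    proof
      fix i assume "i \<in> {a..b} - {fls_subdegree f..n - fls_subdegree g}"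
      then have "i < fls_subdegree f \<or> n - i < fls_subdegree g" by auto
      then show "f $$ i * g $$ (n - i) = 0" by auto
    qed
  qed
  finally show ?thesis .
qed

lemma ring_id_aux: "(n::'a::comm_ring_1) = (n - 2*z*n)*(1 - 2*z) + (z - z*z)*(4*n)"
  by (simp add: algebra_simps)

lemma idem_step:
  fixes e :: "'a::comm_ring_1 fls"
  assumes J: "is_ideal J" and n: "n \<noteq> 0" and sq: "\<forall>m. (e * e) $$ m - e $$ m \<in> J"
    and r1: "\<forall>i. i \<noteq> 0 \<and> n - i \<noteq> 0 \<longrightarrow> e $$ i * e $$ (n - i) \<in> J"
    and r0: "\<forall>i. i \<noteq> 0 \<longrightarrow> e $$ i * e $$ (- i) \<in> J"
  shows "e $$ n \<in> J"
proof -
  define a where "a = min (min (fls_subdegree e) 0) n"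
  define h where "h = (\<lambda>i. e $$ i * e $$ (n - i))"
  define R where "R = {a..n - a} - {0} - {n}"
  have cn: "(e * e) $$ n = (\<Sum>i=a..n - a. h i)"
    unfolding h_def by (rule fls_times_nth_gen) (auto simp: a_def)
  have m0: "0 \<in> {a..n - a}" and mn: "n \<in> {a..n - a}" by (auto simp: a_def)
  have s1: "sum h {a..n - a} = h 0 + sum h ({a..n - a} - {0})"
    by (rule sum.remove) (use m0 in auto)
  have s2: "sum h ({a..n - a} - {0}) = h n + sum h ({a..n - a} - {0} - {n})"
    by (rule sum.remove) (use mn n in auto)
  have "(\<Sum>i=a..n - a. h i) = h 0 + (h n + sum h R)"
    unfolding R_def using s1 s2 by simp
  then have cn2: "(e * e) $$ n = e $$ 0 * e $$ n + (e $$ n * e $$ 0 + sum h R)"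
    using cn by (simp add: h_def)
  have rest: "sum h R \<in> J"
  proof (rule ideal_sum[OF J])
    fix i assume "i \<in> R"
    then have "i \<noteq> 0 \<and> n - i \<noteq> 0" by (auto simp: R_def)
    then show "h i \<in> J" using r1 unfolding h_def by blast
  qed
  define A where "A = e $$ n - 2 * e $$ 0 * e $$ n"
  have "A = sum h R - ((e * e) $$ n - e $$ n)"
    unfolding A_def cn2 by (simp add: algebra_simps)
  moreover have "(e * e) $$ n - e $$ n \<in> J" using sq by blast
  ultimately have AJ: "A \<in> J" using idealD(6)[OF J rest] by simp
  define h0 where "h0 = (\<lambda>i. e $$ i * e $$ (- i))"
  define R0 where "R0 = {a..0 - a} - {0}"
  have c0: "(e * e) $$ 0 = (\<Sum>i=a..0 - a. h0 i)"
    unfolding h0_def using fls_times_nth_gen[of a e 0 e "0 - a"] by (simp add: a_def)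
  have "0 \<in> {a..0 - a}" by (auto simp: a_def)
  then have "(\<Sum>i=a..0 - a. h0 i) = h0 0 + sum h0 R0"
    unfolding R0_def by (simp add: sum.remove)
  then have c02: "(e * e) $$ 0 = e $$ 0 * e $$ 0 + sum h0 R0"
    using c0 by (simp add: h0_def)
  have rest0: "sum h0 R0 \<in> J"
  proof (rule ideal_sum[OF J])
    fix i assume "i \<in> R0"
    then have "i \<noteq> 0" by (auto simp: R0_def)
    then show "h0 i \<in> J" using r0 unfolding h0_def by blast
  qed
  define B where "B = e $$ 0 - e $$ 0 * e $$ 0"
  have "B = sum h0 R0 - ((e * e) $$ 0 - e $$ 0)"
    unfolding B_def c02 by (simp add: algebra_simps)
  moreover have "(e * e) $$ 0 - e $$ 0 \<in> J" using sq by blast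
  ultimately have BJ: "B \<in> J" using idealD(6)[OF J rest0] by simp
  have "e $$ n = A * (1 - 2 * e $$ 0) + B * (4 * e $$ n)"
    unfolding A_def B_def by (rule ring_id_aux)
  also have "\<dots> \<in> J" using idealD(4)[OF J AJ] idealD(4)[OF J BJ] by (rule idealD(2)[OF J])
  finally show ?thesis .
qed

lemma idem_pos:
  fixes e :: "'a::comm_ring_1 fls"
  assumes J: "is_ideal J" and sq: "\<forall>m. (e * e) $$ m - e $$ m \<in> J"
    and neg: "\<forall>i<0. e $$ i \<in> J"
  shows "\<forall>n>0. e $$ n \<in> J"
proof -
  have main: "k > 0 \<Longrightarrow> e $$ (int k) \<in> J" for k :: nat
  proof (induction k rule: less_induct)
    case (less k)
    show ?case
    proof (rule idem_step[OF J _ sq])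
      show "int k \<noteq> 0" using less.prems by simp
      show "\<forall>i. i \<noteq> 0 \<and> int k - i \<noteq> 0 \<longrightarrow> e $$ i * e $$ (int k - i) \<in> J"
      proof (intro allI impI)
        fix i assume i: "i \<noteq> 0 \<and> int k - i \<noteq> 0"
        show "e $$ i * e $$ (int k - i) \<in> J"
        proof (cases "i < 0")
          case True
          then show ?thesis using neg idealD(4)[OF J] by blast
        next
          case False
          show ?thesis
          proof (cases "i > int k")
            case True
            then have "int k - i < 0" by simp
            then show ?thesis using neg idealD(3)[OF J] by blast
          next
            case False
            with \<open>\<not> i < 0\<close> i have "nat i < k" "nat i > 0" by auto
            then have "e $$ int (nat i) \<in> J" using less.IH by blast
            then have "e $$ i \<in> J" using \<open>\<not> i < 0\<close> by simp
            then show ?thesis using idealD(4)[OF J] by blast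
          qed
        qed
      qed
      show "\<forall>i. i \<noteq> 0 \<longrightarrow> e $$ i * e $$ (- i) \<in> J"
      proof (intro allI impI)
        fix i :: int assume "i \<noteq> 0"
        then have "i < 0 \<or> - i < 0" by auto
        then show "e $$ i * e $$ (- i) \<in> J" using neg idealD(3,4)[OF J] by blast
      qed
    qed
  qed
  show ?thesis
  proof (intro allI impI)
    fix n :: int assume "n > 0"
    then have "e $$ int (nat n) \<in> J" using main[of "nat n"] by simp
    then show "e $$ n \<in> J" using \<open>n > 0\<close> by simp
  qed
qed

lemma prod_id_aux: "((j1::'a::comm_ring_1) + a * r1) * (j2 + a * r2) = j1 * (j2 + a * r2) + (a * r1) * j2 + (a * a) * (r1 * r2)"
  by (simp add: algebra_simps)

lemma idem_neg:
  fixes e :: "'a::comm_ring_1 fls"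
  shows "\<forall>J. is_ideal J \<longrightarrow> (\<forall>m. (e * e) $$ m - e $$ m \<in> J) \<longrightarrow> (\<forall>i < - int M. e $$ i \<in> J)
           \<longrightarrow> (\<forall>n. n \<noteq> 0 \<longrightarrow> e $$ n \<in> J)"
proof (induction M)
  case 0
  show ?case
  proof (intro allI impI)
    fix J :: "'a set" and n :: int
    assume J: "is_ideal J" and sq: "\<forall>m. (e * e) $$ m - e $$ m \<in> J"
      and neg: "\<forall>i < - int 0. e $$ i \<in> J" and n: "n \<noteq> 0"
    have neg': "\<forall>i<0. e $$ i \<in> J" using neg by simp
    show "e $$ n \<in> J"
    proof (cases "n < 0")
      case True then show ?thesis using neg' by blast
    next
      case False then have "n > 0" using n by simp
      then show ?thesis using idem_pos[OF J sq neg'] by blast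
    qed
  qed
next
  case (Suc M)
  show ?case
  proof (intro allI impI)
    fix J :: "'a set" and n :: int
    assume J: "is_ideal J" and sq: "\<forall>m. (e * e) $$ m - e $$ m \<in> J"
      and neg: "\<forall>i < - int (Suc M). e $$ i \<in> J" and n: "n \<noteq> 0"
    define c where "c = - int (Suc M)"
    define a0 where "a0 = e $$ c"
    define J' where "J' = {j + a0 * r |j r. j \<in> J}"
    have J'i: "is_ideal J'" unfolding is_ideal_def J'_def
    proof (intro conjI ballI allI)
      have "(0::'a) = 0 + a0 * 0" by simp
      then show "0 \<in> {j + a0 * r |j r. j \<in> J}" using idealD(1)[OF J] by blast
    next
      fix x y assume "x \<in> {j + a0 * r |j r. j \<in> J}" "y \<in> {j + a0 * r |j r. j \<in> J}"
      then obtain j1 r1 j2 r2 where h: "x = j1 + a0 * r1" "y = j2 + a0 * r2" "j1 \<in> J" "j2 \<in> J" by blast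
      then have "x + y = (j1 + j2) + a0 * (r1 + r2)" by (simp add: algebra_simps)
      moreover have "j1 + j2 \<in> J" using idealD(2)[OF J h(3) h(4)] .
      ultimately show "x + y \<in> {j + a0 * r |j r. j \<in> J}" by blast
    next
      fix s x assume "x \<in> {j + a0 * r |j r. j \<in> J}"
      then obtain j1 r1 where h: "x = j1 + a0 * r1" "j1 \<in> J" by blast
      then have "s * x = (s * j1) + a0 * (s * r1)" by (simp add: algebra_simps)
      moreover have "s * j1 \<in> J" using idealD(3)[OF J h(2)] .
      ultimately show "s * x \<in> {j + a0 * r |j r. j \<in> J}" by blast
    qed
    have JJ': "J \<subseteq> J'"
    proof
      fix j assume "j \<in> J"
      moreover have "j = j + a0 * 0" by simp
      ultimately show "j \<in> J'" unfolding J'_def by blast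
    qed
    have a0J': "a0 \<in> J'"
    proof -
      have "a0 = 0 + a0 * 1" by simp
      then show ?thesis unfolding J'_def using idealD(1)[OF J] by blast
    qed
    have sq': "\<forall>m. (e * e) $$ m - e $$ m \<in> J'" using sq JJ' by blast
    have neg2: "\<forall>i < - int M. e $$ i \<in> J'"
    proof (intro allI impI)
      fix i :: int assume "i < - int M"
      then have "i < c \<or> i = c" by (auto simp: c_def)
      then show "e $$ i \<in> J'"
      proof
        assume "i < c"
        then have "e $$ i \<in> J" using neg unfolding c_def by blast
        then show ?thesis using JJ' by blast
      next
        assume "i = c"
        then show ?thesis using a0J' unfolding a0_def by simp
      qed
    qed
    have inJ': "\<forall>n. n \<noteq> 0 \<longrightarrow> e $$ n \<in> J'" using Suc.IH J'i sq' neg2 by blast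
    define lo where "lo = min (fls_subdegree e) c"
    define h where "h = (\<lambda>i. e $$ i * e $$ (2 * c - i))"
    have cc: "(e * e) $$ (2 * c) = (\<Sum>i=lo..2 * c - lo. h i)"
      unfolding h_def by (rule fls_times_nth_gen) (auto simp: lo_def)
    have "c \<in> {lo..2 * c - lo}" by (auto simp: lo_def)
    then have "(\<Sum>i=lo..2 * c - lo. h i) = h c + sum h ({lo..2 * c - lo} - {c})"
      by (simp add: sum.remove)
    then have cc2: "(e * e) $$ (2 * c) = a0 * a0 + sum h ({lo..2 * c - lo} - {c})"
    proof -
      have "2 * c - c = c" by simp
      then have "h c = a0 * a0" unfolding h_def a0_def by simp
      then show ?thesis using cc \<open>(\<Sum>i=lo..2 * c - lo. h i) = h c + sum h ({lo..2 * c - lo} - {c})\<close> by simp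
    qed
    have restc: "sum h ({lo..2 * c - lo} - {c}) \<in> J"
    proof (rule ideal_sum[OF J])
      fix i assume "i \<in> {lo..2 * c - lo} - {c}"
      then have disj: "i < c \<or> 2 * c - i < c" by auto
      have nj: "\<And>j. j < c \<Longrightarrow> e $$ j \<in> J" using neg unfolding c_def by blast
      from disj show "h i \<in> J"
      proof
        assume "i < c"
        then show ?thesis unfolding h_def using idealD(4)[OF J nj] by blast
      next
        assume "2 * c - i < c"
        then show ?thesis unfolding h_def using idealD(3)[OF J nj] by blast
      qed
    qed
    have "2 * c < - int (Suc M)" by (simp add: c_def)
    then have e2c: "e $$ (2 * c) \<in> J" using neg by blast
    have sq2: "(e * e) $$ (2 * c) - e $$ (2 * c) \<in> J" using sq by blast
    have "a0 * a0 = ((e * e) $$ (2 * c) - e $$ (2 * c)) + e $$ (2 * c) - sum h ({lo..2 * c - lo} - {c})"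
      unfolding cc2 by simp
    also have "\<dots> \<in> J"
      using idealD(6)[OF J idealD(2)[OF J sq2 e2c] restc] .
    finally have a2: "a0 * a0 \<in> J" .
    have prodJ: "x * y \<in> J" if xJ: "x \<in> J'" and yJ: "y \<in> J'" for x y
    proof -
      obtain j1 r1 where h1: "x = j1 + a0 * r1" "j1 \<in> J" using xJ unfolding J'_def by blast
      obtain j2 r2 where h2: "y = j2 + a0 * r2" "j2 \<in> J" using yJ unfolding J'_def by blast
      have "x * y = j1 * y + (a0 * r1) * j2 + (a0 * a0) * (r1 * r2)"
        unfolding h1(1) h2(1) by (rule prod_id_aux)
      also have "\<dots> \<in> J"
        using idealD(2)[OF J idealD(2)[OF J idealD(4)[OF J h1(2)] idealD(3)[OF J h2(2)]] idealD(4)[OF J a2]] .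
      finally show ?thesis .
    qed
    show "e $$ n \<in> J"
    proof (rule idem_step[OF J n sq])
      show "\<forall>i. i \<noteq> 0 \<and> n - i \<noteq> 0 \<longrightarrow> e $$ i * e $$ (n - i) \<in> J"
      proof (intro allI impI)
        fix i :: int assume "i \<noteq> 0 \<and> n - i \<noteq> 0"
        then have "e $$ i \<in> J'" "e $$ (n - i) \<in> J'" using inJ' by auto
        then show "e $$ i * e $$ (n - i) \<in> J" by (rule prodJ)
      qed
      show "\<forall>i. i \<noteq> 0 \<longrightarrow> e $$ i * e $$ (- i) \<in> J"
      proof (intro allI impI)
        fix i :: int assume "i \<noteq> 0"
        then have "e $$ i \<in> J'" "e $$ (- i) \<in> J'" using inJ' by auto
        then show "e $$ i * e $$ (- i) \<in> J" by (rule prodJ)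
      qed
    qed
  qed
qed

lemma fls_idem_const:
  fixes e :: "'a::comm_ring_1 fls"
  assumes "e * e = e"
  shows "e = fls_const (e $$ 0)"
proof -
  have J: "is_ideal {0::'a}" by (simp add: is_ideal_def)
  have sq: "\<forall>m. (e * e) $$ m - e $$ m \<in> {0}" using assms by simp
  define M where "M = nat (- fls_subdegree e)"
  have neg: "\<forall>i < - int M. e $$ i \<in> {0}"
  proof (intro allI impI)
    fix i assume "i < - int M"
    then have "i < fls_subdegree e" by (cases "fls_subdegree e \<le> 0") (auto simp: M_def)
    then show "e $$ i \<in> {0}" by simp
  qed
  have "\<forall>n. n \<noteq> 0 \<longrightarrow> e $$ n \<in> {0}" using idem_neg[of e M] J sq neg by blast
  then show ?thesis by (auto simp: fls_eq_iff)
qed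

lemma fps_idem_const:
  fixes e :: "'a::comm_ring_1 fps"
  assumes "e * e = e"
  shows "e = fps_const (e $ 0)"
proof -
  have "fps_to_fls e * fps_to_fls e = fps_to_fls e"
    using assms by (simp add: fls_times_fps_to_fls[symmetric])
  then have E: "fps_to_fls e = fls_const (fps_to_fls e $$ 0)" by (rule fls_idem_const)
  show ?thesis
  proof (rule fps_ext)
    fix n
    have "fps_to_fls e $$ int n = fls_const (fps_to_fls e $$ 0) $$ int n" using E by simp
    then show "e $ n = fps_const (e $ 0) $ n" by (cases "n = 0") auto
  qed
qed



definition Lfls :: "'a::comm_ring_1 set \<Rightarrow> 'a fls set" where
  "Lfls P = {f. \<forall>n. f $$ n \<in> P}"

lemma fls_least_out:
  fixes f :: "'a::comm_ring_1 fls"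
  assumes P0: "0 \<in> P" and ex: "\<exists>i. f $$ i \<notin> P"
  shows "\<exists>i0. f $$ i0 \<notin> P \<and> (\<forall>i<i0. f $$ i \<in> P)"
proof -
  define d where "d = fls_subdegree f"
  define S where "S = {k::nat. f $$ (d + int k) \<notin> P}"
  obtain i where i: "f $$ i \<notin> P" using ex by blast
  then have "f $$ i \<noteq> 0" using P0 by auto
  then have "\<not> i < d" unfolding d_def using fls_eq0_below_subdegree by blast
  then have "d + int (nat (i - d)) = i" by simp
  then have "nat (i - d) \<in> S" unfolding S_def using i by simp
  define k0 where "k0 = (LEAST k. k \<in> S)"
  have k0S: "k0 \<in> S" unfolding k0_def by (rule LeastI) fact
  have "\<forall>i < d + int k0. f $$ i \<in> P"
  proof (intro allI impI)
    fix j assume j: "j < d + int k0"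
    show "f $$ j \<in> P"
    proof (cases "j < d")
      case True
      then show ?thesis using P0 unfolding d_def by simp
    next
      case False
      then have "nat (j - d) < k0" using j by simp
      then have "nat (j - d) \<notin> S" unfolding k0_def by (rule not_less_Least)
      moreover have "d + int (nat (j - d)) = j" using False by simp
      ultimately show ?thesis unfolding S_def by simp
    qed
  qed
  then show ?thesis using k0S unfolding S_def by blast
qed

lemma Lfls_prime:
  fixes P :: "'a::comm_ring_1 set"
  assumes pr: "prime_ideal P"
  shows "prime_ideal (Lfls P)"
proof -
  have Pi: "is_ideal P" using pr by (rule prime_is_ideal)
  have 1: "1 \<notin> P" using pr by (simp add: prime_ideal_def)
  have pp: "\<And>x y. x * y \<in> P \<Longrightarrow> x \<in> P \<or> y \<in> P" using pr by (simp add: prime_ideal_def)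
  show ?thesis
    unfolding prime_ideal_def
  proof (intro conjI ballI allI impI)
    show "0 \<in> Lfls P" using idealD(1)[OF Pi] by (simp add: Lfls_def)
  next
    fix x y assume "x \<in> Lfls P" "y \<in> Lfls P"
    then show "x + y \<in> Lfls P" using idealD(2)[OF Pi] by (simp add: Lfls_def)
  next
    fix r x assume x: "x \<in> Lfls P"
    show "r * x \<in> Lfls P"
      unfolding Lfls_def
    proof (intro CollectI allI)
      fix n
      have "(r * x) $$ n = (\<Sum>i=fls_subdegree r..n - fls_subdegree x. r $$ i * x $$ (n - i))"
        by (rule fls_times_nth(2))
      also have "\<dots> \<in> P"
      proof (rule ideal_sum[OF Pi])
        fix i
        have "x $$ (n - i) \<in> P" using x by (simp add: Lfls_def)
        then show "r $$ i * x $$ (n - i) \<in> P" by (rule idealD(3)[OF Pi])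
      qed
      finally show "(r * x) $$ n \<in> P" .
    qed
  next
    show "1 \<notin> Lfls P"
    proof
      assume "1 \<in> Lfls P"
      then have "\<forall>n. (1::'a fls) $$ n \<in> P" unfolding Lfls_def by blast
      then have "(1::'a fls) $$ 0 \<in> P" by blast
      then show False using 1 by simp
    qed
  next
    fix x y :: "'a fls" assume xy: "x * y \<in> Lfls P"
    show "x \<in> Lfls P \<or> y \<in> Lfls P"
    proof (rule ccontr)
      assume "\<not> (x \<in> Lfls P \<or> y \<in> Lfls P)"
      then have "x \<notin> Lfls P" "y \<notin> Lfls P" by blast+
      then have ex1: "\<exists>i. x $$ i \<notin> P" and ex2: "\<exists>i. y $$ i \<notin> P" unfolding Lfls_def by blast+
      obtain i0 where i0: "x $$ i0 \<notin> P" "\<forall>i<i0. x $$ i \<in> P"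
        using fls_least_out[OF idealD(1)[OF Pi] ex1] by blast
      obtain j0 where j0: "y $$ j0 \<notin> P" "\<forall>j<j0. y $$ j \<in> P"
        using fls_least_out[OF idealD(1)[OF Pi] ex2] by blast
      define n where "n = i0 + j0"
      define h where "h = (\<lambda>i. x $$ i * y $$ (n - i))"
      have xn: "x $$ i0 \<noteq> 0" using i0(1) idealD(1)[OF Pi] by metis
      have i0d: "fls_subdegree x \<le> i0"
      proof (rule ccontr)
        assume "\<not> fls_subdegree x \<le> i0"
        then have "i0 < fls_subdegree x" by simp
        then show False using xn by simp
      qed
      have yn: "y $$ j0 \<noteq> 0" using j0(1) idealD(1)[OF Pi] by metis
      have j0d: "fls_subdegree y \<le> j0"
      proof (rule ccontr)
        assume "\<not> fls_subdegree y \<le> j0"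
        then have "j0 < fls_subdegree y" by simp
        then show False using yn by simp
      qed
      define A where "A = {fls_subdegree x..n - fls_subdegree y}"
      have "(x * y) $$ n = sum h A" unfolding h_def A_def by (rule fls_times_nth(2))
      moreover have "i0 \<in> A" using i0d j0d by (simp add: A_def n_def)
      moreover have "sum h A = h i0 + sum h (A - {i0})"
        by (rule sum.remove) (simp add: A_def, fact)
      ultimately have eq: "(x * y) $$ n = h i0 + sum h (A - {i0})" by simp
      have rest: "sum h (A - {i0}) \<in> P"
      proof (rule ideal_sum[OF Pi])
        fix i assume "i \<in> A - {i0}"
        then have "i \<noteq> i0" by blast
        then have "i < i0 \<or> n - i < j0" unfolding n_def by linarith
        then show "h i \<in> P"
        proof
          assume "i < i0"
          then have "x $$ i \<in> P" using i0 by blast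
          then show ?thesis unfolding h_def by (rule idealD(4)[OF Pi])
        next
          assume "n - i < j0"
          then have "y $$ (n - i) \<in> P" using j0 by blast
          then show ?thesis unfolding h_def by (rule idealD(3)[OF Pi])
        qed
      qed
      have "(x * y) $$ n \<in> P" using xy by (simp add: Lfls_def)
      then have "(x * y) $$ n - sum h (A - {i0}) \<in> P" using rest by (rule idealD(6)[OF Pi])
      then have "h i0 \<in> P" using eq by simp
      then have "x $$ i0 * y $$ j0 \<in> P" by (simp add: h_def n_def)
      then show False using pp i0 j0 by blast
    qed
  qed
qed

definition rhom :: "('a::comm_ring_1 \<Rightarrow> 'b::comm_ring_1) \<Rightarrow> bool" where
  "rhom f \<longleftrightarrow> f 0 = 0 \<and> f 1 = 1 \<and> (\<forall>x y. f (x + y) = f x + f y) \<and> (\<forall>x y. f (x * y) = f x * f y)"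

lemma prime_preimage:
  assumes h: "rhom f" and Q: "prime_ideal Q"
  shows "prime_ideal (f -` Q)"
proof -
  have f0: "f 0 = 0" and f1: "f 1 = 1" and fa: "\<And>x y. f (x + y) = f x + f y"
    and fm: "\<And>x y. f (x * y) = f x * f y" using h unfolding rhom_def by auto
  have q0: "0 \<in> Q" and qa: "\<And>x y. x \<in> Q \<Longrightarrow> y \<in> Q \<Longrightarrow> x + y \<in> Q"
    and qm: "\<And>r x. x \<in> Q \<Longrightarrow> r * x \<in> Q" and q1: "1 \<notin> Q"
    and qp: "\<And>x y. x * y \<in> Q \<Longrightarrow> x \<in> Q \<or> y \<in> Q"
    using Q unfolding prime_ideal_def by blast+
  show ?thesis
    unfolding prime_ideal_def
  proof (intro conjI ballI allI impI)
    show "0 \<in> f -` Q" using q0 f0 by simp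
    show "\<And>x y. x \<in> f -` Q \<Longrightarrow> y \<in> f -` Q \<Longrightarrow> x + y \<in> f -` Q" using qa fa by simp
    show "\<And>r x. x \<in> f -` Q \<Longrightarrow> r * x \<in> f -` Q" using qm fm by simp
    show "1 \<notin> f -` Q" using q1 f1 by simp
    show "\<And>x y. x * y \<in> f -` Q \<Longrightarrow> x \<in> f -` Q \<or> y \<in> f -` Q" using qp fm by simp
  qed
qed

lemma rhom_fps_const: "rhom (fps_const :: 'a::comm_ring_1 \<Rightarrow> 'a fps)"
  unfolding rhom_def by simp

lemma rhom_fps_to_fls: "rhom (fps_to_fls :: 'a::comm_ring_1 fps \<Rightarrow> 'a fls)"
  unfolding rhom_def by (simp add: fls_times_fps_to_fls)

lemma rhom_id: "rhom (id :: 'a::comm_ring_1 \<Rightarrow> 'a)"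
  unfolding rhom_def by simp

lemma contract_Lfls:
  fixes P :: "'a::comm_ring_1 set"
  assumes P0: "0 \<in> P"
  shows "fps_const -` (fps_to_fls -` Lfls P) = P"
proof -
  have "b \<in> fps_const -` (fps_to_fls -` Lfls P) \<longleftrightarrow> b \<in> P" for b
  proof -
    have "b \<in> fps_const -` (fps_to_fls -` Lfls P) \<longleftrightarrow> fls_const b \<in> Lfls P"
      by (simp only: vimage_eq fps_const_to_fls)
    also have "\<dots> \<longleftrightarrow> (\<forall>n. fls_const b $$ n \<in> P)" by (simp only: Lfls_def mem_Collect_eq)
    also have "\<dots> \<longleftrightarrow> b \<in> P"
    proof
      assume "\<forall>n. fls_const b $$ n \<in> P"
      then have "fls_const b $$ 0 \<in> P" by blast
      then show "b \<in> P" by simp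
    next
      assume "b \<in> P"
      then show "\<forall>n. fls_const b $$ n \<in> P" using P0 by simp
    qed
    finally show ?thesis .
  qed
  then show ?thesis by blast
qed



lemma generic:
  fixes \<psi> :: "'b::comm_ring_1 \<Rightarrow> 'a::comm_ring_1" and \<phi> :: "'a \<Rightarrow> 'c::comm_ring_1"
    and sA :: "'b set \<Rightarrow> 'a set" and sC :: "'b set \<Rightarrow> 'c set" and N :: "'n set"
  assumes hpsi: "rhom \<psi>" and hphi: "rhom \<phi>"
    and sA: "\<And>P. P \<in> Spec \<Longrightarrow> sA P \<in> Spec \<and> \<psi> -` sA P = P"
    and sC: "\<And>P. P \<in> Spec \<Longrightarrow> sC P \<in> Spec \<and> \<phi> -` sC P = sA P"
    and idA: "\<And>e::'a. e * e = e \<Longrightarrow> \<exists>b. e = \<psi> b"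
    and idC: "\<And>e::'c. e * e = e \<Longrightarrow> \<exists>b. e = \<phi> (\<psi> b)"
  shows "bij_betw (sheaf_map \<phi>) (const_sheaf N) (const_sheaf N)"
proof -
  have preA: "\<psi> -` R \<in> Spec" if "R \<in> Spec" for R :: "'a set"
    using prime_preimage[OF hpsi] that by (simp add: Spec_def)
  have preC: "\<phi> -` Q \<in> Spec" if "Q \<in> Spec" for Q :: "'c set"
    using prime_preimage[OF hphi] that by (simp add: Spec_def)
  have KA: "g R = g (sA (\<psi> -` R))" if g: "g \<in> const_sheaf N" and R: "R \<in> Spec"
    for g :: "'a set \<Rightarrow> 'n" and R
  proof -
    have lc: "locally_constant_on_Spec g" using g by (simp add: const_sheaf_def)
    obtain e where "e * e = e" and E: "\<forall>P\<in>Spec. g P = g R \<longleftrightarrow> e \<notin> P"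
      using lc_idempotent[OF lc, of "g R"] by blast
    then obtain b where eb: "e = \<psi> b" using idA by blast
    define P0 where "P0 = \<psi> -` R"
    have P0S: "P0 \<in> Spec" unfolding P0_def by (rule preA[OF R])
    have "e \<notin> R" using E R by blast
    then have "b \<notin> P0" unfolding P0_def eb by simp
    then have "b \<notin> \<psi> -` sA P0" using sA[OF P0S] by simp
    then have "e \<notin> sA P0" unfolding eb by simp
    then have "g (sA P0) = g R" using E sA[OF P0S] by blast
    then show ?thesis unfolding P0_def by simp
  qed
  have KC: "h Q = h (sC (\<psi> -` (\<phi> -` Q)))" if h: "h \<in> const_sheaf N" and Q: "Q \<in> Spec"
    for h :: "'c set \<Rightarrow> 'n" and Q
  proof -
    have lc: "locally_constant_on_Spec h" using h by (simp add: const_sheaf_def)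
    obtain e where "e * e = e" and E: "\<forall>P\<in>Spec. h P = h Q \<longleftrightarrow> e \<notin> P"
      using lc_idempotent[OF lc, of "h Q"] by blast
    then obtain b where eb: "e = \<phi> (\<psi> b)" using idC by blast
    define P0 where "P0 = \<psi> -` (\<phi> -` Q)"
    have P0S: "P0 \<in> Spec" unfolding P0_def by (rule preA[OF preC[OF Q]])
    have "e \<notin> Q" using E Q by blast
    then have "b \<notin> P0" unfolding P0_def eb by simp
    then have "b \<notin> \<psi> -` sA P0" using sA[OF P0S] by simp
    then have "\<psi> b \<notin> \<phi> -` sC P0" using sC[OF P0S] by simp
    then have "e \<notin> sC P0" unfolding eb by simp
    then have "h (sC P0) = h Q" using E sC[OF P0S] by blast
    then show ?thesis unfolding P0_def by simp
  qed
  have into: "sheaf_map \<phi> g \<in> const_sheaf N" if g: "g \<in> const_sheaf N" for g :: "'a set \<Rightarrow> 'n"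
  proof -
    have gpi: "\<And>R. R \<in> Spec \<Longrightarrow> g R \<in> N" using g by (auto simp: const_sheaf_def)
    have lc: "locally_constant_on_Spec g" using g by (simp add: const_sheaf_def)
    have "sheaf_map \<phi> g \<in> extensional Spec" unfolding sheaf_map_def by simp
    moreover have "sheaf_map \<phi> g \<in> Spec \<rightarrow> N"
      unfolding sheaf_map_def using gpi preC by auto
    moreover have "locally_constant_on_Spec (sheaf_map \<phi> g)"
      unfolding locally_constant_on_Spec_def
    proof
      fix Q :: "'c set" assume Q: "Q \<in> Spec"
      obtain S where S: "\<phi> -` Q \<in> zariski_open S" "\<And>R. R \<in> zariski_open S \<Longrightarrow> g R = g (\<phi> -` Q)"
        using lc preC[OF Q] unfolding locally_constant_on_Spec_def by blast
      obtain s where s: "s \<in> S" "s \<notin> \<phi> -` Q" using S(1) by (auto simp: zariski_open_def)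
      have "Q \<in> zariski_open (\<phi> ` S)" using Q s by (auto simp: zariski_open_def)
      moreover have "sheaf_map \<phi> g Q' = sheaf_map \<phi> g Q" if Q': "Q' \<in> zariski_open (\<phi> ` S)" for Q'
      proof -
        have Q'S: "Q' \<in> Spec" using Q' by (simp add: zariski_open_def)
        obtain s' where "s' \<in> S" "\<phi> s' \<notin> Q'" using Q' by (auto simp: zariski_open_def)
        then have "\<phi> -` Q' \<in> zariski_open S" using preC[OF Q'S] by (auto simp: zariski_open_def)
        then have "g (\<phi> -` Q') = g (\<phi> -` Q)" by (rule S(2))
        then show ?thesis using Q Q'S by (simp add: sheaf_map_def)
      qed
      ultimately show "\<exists>S. Q \<in> zariski_open S \<and> (\<forall>Q'\<in>zariski_open S. sheaf_map \<phi> g Q' = sheaf_map \<phi> g Q)"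
        by blast
    qed
    ultimately show ?thesis by (simp add: const_sheaf_def)
  qed
  have inj: "inj_on (sheaf_map \<phi>) (const_sheaf N)"
  proof (rule inj_onI)
    fix g1 g2 :: "'a set \<Rightarrow> 'n"
    assume g1: "g1 \<in> const_sheaf N" and g2: "g2 \<in> const_sheaf N"
      and eq: "sheaf_map \<phi> g1 = sheaf_map \<phi> g2"
    show "g1 = g2"
    proof (rule extensionalityI)
      show "g1 \<in> extensional Spec" using g1 by (simp add: const_sheaf_def)
      show "g2 \<in> extensional Spec" using g2 by (simp add: const_sheaf_def)
    next
      fix R :: "'a set" assume R: "R \<in> Spec"
      define P0 where "P0 = \<psi> -` R"
      have P0S: "P0 \<in> Spec" unfolding P0_def by (rule preA[OF R])
      have CS: "sC P0 \<in> Spec" and CA: "\<phi> -` sC P0 = sA P0" using sC[OF P0S] by auto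
      have "g1 R = g1 (\<phi> -` sC P0)" using KA[OF g1 R] CA unfolding P0_def by simp
      also have "\<dots> = sheaf_map \<phi> g1 (sC P0)" using CS by (simp add: sheaf_map_def)
      also have "\<dots> = sheaf_map \<phi> g2 (sC P0)" using eq by simp
      also have "\<dots> = g2 (\<phi> -` sC P0)" using CS by (simp add: sheaf_map_def)
      also have "\<dots> = g2 R" using KA[OF g2 R] CA unfolding P0_def by simp
      finally show "g1 R = g2 R" .
    qed
  qed
  have surj: "h \<in> sheaf_map \<phi> ` const_sheaf N" if h: "h \<in> const_sheaf N" for h :: "'c set \<Rightarrow> 'n"
  proof -
    define g where "g = restrict (\<lambda>R. h (sC (\<psi> -` R))) Spec"
    have hpi: "\<And>Q. Q \<in> Spec \<Longrightarrow> h Q \<in> N" using h by (auto simp: const_sheaf_def)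
    have lch: "locally_constant_on_Spec h" using h by (simp add: const_sheaf_def)
    have gS: "g \<in> const_sheaf N"
    proof -
      have "g \<in> extensional Spec" unfolding g_def by simp
      moreover have "g \<in> Spec \<rightarrow> N" unfolding g_def using hpi sC preA by auto
      moreover have "locally_constant_on_Spec g"
        unfolding locally_constant_on_Spec_def
      proof
        fix R :: "'a set" assume R: "R \<in> Spec"
        define P0 where "P0 = \<psi> -` R"
        have P0S: "P0 \<in> Spec" unfolding P0_def by (rule preA[OF R])
        obtain e where "e * e = e" and E: "\<forall>Q\<in>Spec. h Q = h (sC P0) \<longleftrightarrow> e \<notin> Q"
          using lc_idempotent[OF lch, of "h (sC P0)"] by blast
        then obtain b where eb: "e = \<phi> (\<psi> b)" using idC by blast
        have "e \<notin> sC P0" using E sC[OF P0S] by blast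
        then have "\<psi> b \<notin> \<phi> -` sC P0" unfolding eb by simp
        then have "\<psi> b \<notin> sA P0" using sC[OF P0S] by simp
        then have "b \<notin> \<psi> -` sA P0" by simp
        then have "b \<notin> P0" using sA[OF P0S] by simp
        then have "\<psi> b \<notin> R" unfolding P0_def by simp
        then have "R \<in> zariski_open {\<psi> b}" using R by (simp add: zariski_open_def)
        moreover have "g R' = g R" if R': "R' \<in> zariski_open {\<psi> b}" for R'
        proof -
          have R'S: "R' \<in> Spec" and nb: "\<psi> b \<notin> R'" using R' by (auto simp: zariski_open_def)
          define P1 where "P1 = \<psi> -` R'"
          have P1S: "P1 \<in> Spec" unfolding P1_def by (rule preA[OF R'S])
          have "b \<notin> P1" using nb unfolding P1_def by simp
          then have "b \<notin> \<psi> -` sA P1" using sA[OF P1S] by simp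
          then have "\<psi> b \<notin> \<phi> -` sC P1" using sC[OF P1S] by simp
          then have "e \<notin> sC P1" unfolding eb by simp
          then have "h (sC P1) = h (sC P0)" using E sC[OF P1S] by blast
          then show ?thesis using R R'S unfolding g_def P0_def P1_def by simp
        qed
        ultimately show "\<exists>S. R \<in> zariski_open S \<and> (\<forall>Q\<in>zariski_open S. g Q = g R)" by blast
      qed
      ultimately show ?thesis by (simp add: const_sheaf_def)
    qed
    have "h = sheaf_map \<phi> g"
    proof (rule extensionalityI)
      show "h \<in> extensional Spec" using h by (simp add: const_sheaf_def)
      show "sheaf_map \<phi> g \<in> extensional Spec" unfolding sheaf_map_def by simp
    next
      fix Q :: "'c set" assume Q: "Q \<in> Spec"
      have "sheaf_map \<phi> g Q = g (\<phi> -` Q)" using Q by (simp add: sheaf_map_def)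
      also have "\<dots> = h (sC (\<psi> -` (\<phi> -` Q)))" using preC[OF Q] by (simp add: g_def)
      also have "\<dots> = h Q" using KC[OF h Q] by simp
      finally show "h Q = sheaf_map \<phi> g Q" by simp
    qed
    then show ?thesis using gS by blast
  qed
  show ?thesis
    unfolding bij_betw_def using inj into surj by blast
qed



theorem lemma2p5:
  fixes N :: "'n set"
  assumes "finite N"
  shows "bij_betw (sheaf_map (fps_const :: 'b::comm_ring_1 \<Rightarrow> 'b fps))
           (const_sheaf N) (const_sheaf N)
       \<and> bij_betw (sheaf_map (fps_to_fls :: 'b fps \<Rightarrow> 'b fls))
           (const_sheaf N) (const_sheaf N)"
proof
  have P0: "0 \<in> P" if "P \<in> Spec" for P :: "'b set" using that by (simp add: Spec_def prime_ideal_def)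
  have LS: "Lfls P \<in> Spec" if "P \<in> Spec" for P :: "'b set"
    using Lfls_prime that by (simp add: Spec_def)
  have KS: "fps_to_fls -` Lfls P \<in> Spec" if "P \<in> Spec" for P :: "'b set"
  proof -
    have "prime_ideal P" using that by (simp add: Spec_def)
    then have "prime_ideal (fps_to_fls -` Lfls P)" by (rule prime_preimage[OF rhom_fps_to_fls Lfls_prime])
    then show ?thesis by (simp add: Spec_def)
  qed
  show "bij_betw (sheaf_map (fps_const :: 'b \<Rightarrow> 'b fps)) (const_sheaf N) (const_sheaf N)"
  proof (rule generic[where \<psi> = "id :: 'b \<Rightarrow> 'b" and sA = "\<lambda>P. P" and sC = "\<lambda>P. fps_to_fls -` Lfls P"])
    show "rhom (id :: 'b \<Rightarrow> 'b)" by (rule rhom_id)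
    show "rhom (fps_const :: 'b \<Rightarrow> 'b fps)" by (rule rhom_fps_const)
    show "\<And>P::'b set. P \<in> Spec \<Longrightarrow> P \<in> Spec \<and> id -` P = P" by simp
    show "\<And>P::'b set. P \<in> Spec \<Longrightarrow> fps_to_fls -` Lfls P \<in> Spec \<and> fps_const -` (fps_to_fls -` Lfls P) = P"
      using KS contract_Lfls P0 by blast
    show "\<And>e::'b. e * e = e \<Longrightarrow> \<exists>b. e = id b" by simp
    show "\<And>e::'b fps. e * e = e \<Longrightarrow> \<exists>b. e = fps_const (id b)"
      using fps_idem_const by (metis id_apply)
  qed
  show "bij_betw (sheaf_map (fps_to_fls :: 'b fps \<Rightarrow> 'b fls)) (const_sheaf N) (const_sheaf N)"
  proof (rule generic[where \<psi> = "fps_const :: 'b \<Rightarrow> 'b fps" and sA = "\<lambda>P. fps_to_fls -` Lfls P" and sC = "Lfls"])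
    show "rhom (fps_const :: 'b \<Rightarrow> 'b fps)" by (rule rhom_fps_const)
    show "rhom (fps_to_fls :: 'b fps \<Rightarrow> 'b fls)" by (rule rhom_fps_to_fls)
    show "\<And>P::'b set. P \<in> Spec \<Longrightarrow> fps_to_fls -` Lfls P \<in> Spec \<and> fps_const -` (fps_to_fls -` Lfls P) = P"
      using KS contract_Lfls P0 by blast
    show "\<And>P::'b set. P \<in> Spec \<Longrightarrow> Lfls P \<in> Spec \<and> fps_to_fls -` Lfls P = fps_to_fls -` Lfls P"
      using LS by blast
    show "\<And>e::'b fps. e * e = e \<Longrightarrow> \<exists>b. e = fps_const b"
      using fps_idem_const by blast
    show "\<And>e::'b fls. e * e = e \<Longrightarrow> \<exists>b. e = fps_to_fls (fps_const b)"
      using fls_idem_const by (metis fps_const_to_fls)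
  qed
qed

end
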